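(* Let $k\in\mathbb N$ be odd. Then the polynomial $2^{2(k-1)}(a^k-b^k)^2-(a-b)^{2k}\in\mathbb R[a,b]$ is a sum of squares of polynomials (of degree at most $k$). *)

theory Defs
  imports Complex_Main
begin

definition bipoly_deg_le :: "nat \<Rightarrow> (real \<Rightarrow> real \<Rightarrow> real) \<Rightarrow> bool" where
  "bipoly_deg_le d q \<longleftrightarrow>
     (\<exists>c :: nat \<Rightarrow> nat \<Rightarrow> real. \<forall>a b. q a b = (\<Sum>i\<le>d. \<Sum>j\<le>d - i. c i j * a ^ i * b ^ j))"

end

theory Submission imports Defs begin
definition PP :: "nat \<Rightarrow> (nat \<times> nat) set" where "PP d = {(i,j). i + j \<le> d}"

lemma PP_Sigma: "PP d = Sigma {..d} (\<lambda>i. {..d-i})"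
  unfolding PP_def by auto

lemma finite_PP[simp]: "finite (PP d)"
  unfolding PP_Sigma by auto

lemma bp_alt: "bipoly_deg_le d q \<longleftrightarrow>
   (\<exists>c. \<forall>a b. q a b = (\<Sum>(i,j)\<in>PP d. c i j * a ^ i * b ^ j))"
  unfolding bipoly_deg_le_def PP_Sigma by (simp add: sum.Sigma)

lemma bp_mono: assumes "d \<le> e" "bipoly_deg_le d q" shows "bipoly_deg_le e q"
proof -
  obtain c where c: "\<forall>a b. q a b = (\<Sum>(i,j)\<in>PP d. c i j * a ^ i * b ^ j)"
    using assms(2) bp_alt by blast
  define c' where "c' i j = (if i + j \<le> d then c i j else 0)" for i j
  have sub: "PP d \<subseteq> PP e" using assms(1) unfolding PP_def by auto
  have "q a b = (\<Sum>(i,j)\<in>PP e. c' i j * a ^ i * b ^ j)" for a b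
  proof -
    have "(\<Sum>(i,j)\<in>PP e. c' i j * a ^ i * b ^ j) = (\<Sum>(i,j)\<in>PP d. c' i j * a ^ i * b ^ j)"
      by (rule sum.mono_neutral_right[OF finite_PP sub]) (auto simp: PP_def c'_def split: if_splits)
    also have "\<dots> = (\<Sum>(i,j)\<in>PP d. c i j * a ^ i * b ^ j)"
      by (rule sum.cong) (auto simp: PP_def c'_def)
    finally show ?thesis using c by simp
  qed
  then show ?thesis unfolding bp_alt by (intro exI[of _ c']) blast
qed

lemma bp_add: assumes "bipoly_deg_le d p" "bipoly_deg_le d q"
  shows "bipoly_deg_le d (\<lambda>a b. p a b + q a b)"
proof -
  obtain c where c: "\<forall>a b. p a b = (\<Sum>(i,j)\<in>PP d. c i j * a ^ i * b ^ j)"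
    using assms(1) bp_alt by blast
  obtain c' where c': "\<forall>a b. q a b = (\<Sum>(i,j)\<in>PP d. c' i j * a ^ i * b ^ j)"
    using assms(2) bp_alt by blast
  have "p a b + q a b = (\<Sum>(i,j)\<in>PP d. (c i j + c' i j) * a ^ i * b ^ j)" for a b
    by (simp add: c c' sum.distrib[symmetric] case_prod_beta algebra_simps)
  then show ?thesis unfolding bp_alt by (intro exI[of _ "\<lambda>i j. c i j + c' i j"]) blast
qed

lemma bp_zero: "bipoly_deg_le d (\<lambda>a b. 0)"
  unfolding bipoly_deg_le_def by (rule exI[of _ "\<lambda>i j. 0"]) simp

lemma bp_const: "bipoly_deg_le d (\<lambda>a b. r)"
proof -
  have "(\<Sum>(i,j)\<in>PP d. (if i = 0 \<and> j = 0 then r else 0) * a ^ i * b ^ j) = r" for a b :: real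
  proof -
    have "(\<Sum>(i,j)\<in>PP d. (if i = 0 \<and> j = 0 then r else 0) * a ^ i * b ^ j)
        = (\<Sum>(i,j)\<in>{(0,0)}. (if i = 0 \<and> j = 0 then r else 0) * a ^ i * b ^ j)"
      by (rule sum.mono_neutral_right[OF finite_PP]) (auto simp: PP_def split: if_splits)
    then show ?thesis by simp
  qed
  then show ?thesis unfolding bp_alt by (intro exI[of _ "\<lambda>i j. if i = 0 \<and> j = 0 then r else 0"]) simp
qed

lemma bp_sum: assumes "finite A" "\<forall>x\<in>A. bipoly_deg_le d (f x)"
  shows "bipoly_deg_le d (\<lambda>a b. \<Sum>x\<in>A. f x a b)"
  using assms by (induction A rule: finite_induct) (auto intro: bp_zero bp_add)

lemma bp_mult: assumes "bipoly_deg_le d p" "bipoly_deg_le e q"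
  shows "bipoly_deg_le (d + e) (\<lambda>a b. p a b * q a b)"
proof -
  obtain c where c: "\<forall>a b. p a b = (\<Sum>s\<in>PP d. c (fst s) (snd s) * a ^ fst s * b ^ snd s)"
    using assms(1) bp_alt by (auto simp: case_prod_beta)
  obtain c' where c': "\<forall>a b. q a b = (\<Sum>t\<in>PP e. c' (fst t) (snd t) * a ^ fst t * b ^ snd t)"
    using assms(2) bp_alt by (auto simp: case_prod_beta)
  define g where "g = (\<lambda>(s::nat\<times>nat, t::nat\<times>nat). (fst s + fst t, snd s + snd t))"
  define h where "h = (\<lambda>(s::nat\<times>nat, t::nat\<times>nat). c (fst s) (snd s) * c' (fst t) (snd t))"
  define C where "C i j = (\<Sum>x\<in>{x. x \<in> PP d \<times> PP e \<and> g x = (i,j)}. h x)" for i j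
  have gim: "g ` (PP d \<times> PP e) \<subseteq> PP (d + e)"
    unfolding g_def PP_def by auto
  have "p a b * q a b = (\<Sum>(i,j)\<in>PP (d+e). C i j * a ^ i * b ^ j)" for a b :: real
  proof -
    define m where "m = (\<lambda>(u::nat\<times>nat). a ^ fst u * b ^ snd u)"
    have "p a b * q a b = (\<Sum>s\<in>PP d. c (fst s) (snd s) * a ^ fst s * b ^ snd s) *
        (\<Sum>t\<in>PP e. c' (fst t) (snd t) * a ^ fst t * b ^ snd t)" using c c' by simp
    also have "\<dots> = (\<Sum>x\<in>PP d \<times> PP e. h x * m (g x))"
      unfolding sum_product sum.cartesian_product
      by (rule sum.cong) (auto simp: h_def m_def g_def power_add algebra_simps)
    also have "\<dots> = (\<Sum>u\<in>PP (d+e). \<Sum>x\<in>{x. x \<in> PP d \<times> PP e \<and> g x = u}. h x * m (g x))"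
      by (rule sum.group[symmetric]) (auto simp: gim)
    also have "\<dots> = (\<Sum>u\<in>PP (d+e). C (fst u) (snd u) * m u)"
      unfolding C_def sum_distrib_right
      by (rule sum.cong, simp, rule sum.cong) auto
    finally show ?thesis by (simp add: m_def case_prod_beta mult.assoc)
  qed
  then show ?thesis unfolding bp_alt by (intro exI[of _ C]) blast
qed

lemma bp_scale: assumes "bipoly_deg_le d p" shows "bipoly_deg_le d (\<lambda>a b. r * p a b)"
  using bp_mult[OF bp_const[of 0 r] assms] by simp

lemma bp_lin: "bipoly_deg_le 1 (\<lambda>a b. \<alpha> * a + \<beta> * b)"
  unfolding bipoly_deg_le_def
  by (intro exI[of _ "\<lambda>i j. if i = 1 \<and> j = 0 then \<alpha> else if i = 0 \<and> j = 1 then \<beta> else 0"])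
     (simp add: atMost_Suc)

lemma bp_power: assumes "bipoly_deg_le d p" shows "bipoly_deg_le (n * d) (\<lambda>a b. p a b ^ n)"
proof (induction n)
  case 0 show ?case using bp_const[of 0 1] by simp
next
  case (Suc n) show ?case using bp_mult[OF assms Suc] by (simp add: mult.commute)
qed

lemma binom_diff:
  fixes x y :: real assumes "odd k"
  shows "(x+y)^k - (x-y)^k = 2*(\<Sum>j<k. if odd j then real (k choose j) * x^(k-j) * y^j else 0) + 2*y^k"
proof -
  have e1: "(x+y)^k = (\<Sum>j\<le>k. real (k choose j) * y^j * x^(k-j))"
    using binomial_ring[of y x k] by (simp add: add.commute)
  have e2: "(x-y)^k = (\<Sum>j\<le>k. real (k choose j) * (-y)^j * x^(k-j))"
    using binomial_ring[of "-y" x k] by simp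
  have "(x+y)^k - (x-y)^k = (\<Sum>j\<le>k. if odd j then 2 * (real (k choose j) * x^(k-j) * y^j) else 0)"
    unfolding e1 e2 sum_subtractf[symmetric]
    by (rule sum.cong) (auto simp: power_minus_odd)
  also have "\<dots> = (\<Sum>j<k. if odd j then 2 * (real (k choose j) * x^(k-j) * y^j) else 0) + 2*y^k"
    using assms by (simp add: lessThan_Suc_atMost[symmetric])
  also have "\<dots> = 2*(\<Sum>j<k. if odd j then real (k choose j) * x^(k-j) * y^j else 0) + 2*y^k"
    by (subst sum_distrib_left) (rule arg_cong2[where f="(+)"], rule sum.cong, auto)
  finally show ?thesis .
qed

theorem mainTheorem17:
  fixes k :: nat
  assumes "odd k"
  shows "\<exists>(m::nat) (q :: nat \<Rightarrow> real \<Rightarrow> real \<Rightarrow> real).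
           (\<forall>l<m. bipoly_deg_le k (q l)) \<and>
           (\<forall>a b :: real. 2 ^ (2 * (k - 1)) * (a ^ k - b ^ k)\<^sup>2 - (a - b) ^ (2 * k)
                          = (\<Sum>l<m. (q l a b)\<^sup>2))"
proof -
  define X where "X = (\<lambda>a b::real. (1/2) * a + (1/2) * b)"
  define Y where "Y = (\<lambda>a b::real. (1/2) * a + (-1/2) * b)"
  define T where "T = (\<lambda>a b. \<Sum>j<k. if odd j then real (k choose j) * X a b^(k-j) * Y a b^j else 0)"
  define M where "M = (\<lambda>l a b. if odd l then (2::real)^k * sqrt (2 * real (k choose l)) * X a b ^ ((k-l) div 2) * Y a b ^ ((k+l) div 2) else 0)"
  define q where "q = (\<lambda>l a b. if l < k then M l a b else 2^k * T a b)"
  have bX: "bipoly_deg_le 1 X" unfolding X_def by (rule bp_lin)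
  have bY: "bipoly_deg_le 1 Y" unfolding Y_def by (rule bp_lin)
  have bXY: "bipoly_deg_le (i + j) (\<lambda>a b. X a b ^ i * Y a b ^ j)" for i j
    using bp_mult[OF bp_power[OF bX, of i] bp_power[OF bY, of j]] by simp
  have bM: "bipoly_deg_le k (M l)" if "l < k" for l
  proof (cases "odd l")
    case True
    have kk: "(k - l) div 2 + (k + l) div 2 = k" using True assms that by presburger
    have "bipoly_deg_le k (\<lambda>a b. X a b ^ ((k-l) div 2) * Y a b ^ ((k+l) div 2))"
      using bXY[of "(k-l) div 2" "(k+l) div 2"] unfolding kk .
    from bp_scale[OF this, of "2^k * sqrt (2 * real (k choose l))"]
    show ?thesis using True unfolding M_def by (simp add: mult.assoc)
  next
    case False then show ?thesis unfolding M_def using bp_zero by simp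
  qed
  have bT: "bipoly_deg_le k T"
    unfolding T_def
  proof (rule bp_sum, simp, intro ballI)
    fix j assume "j \<in> {..<k}"
    then have kk: "k - j + j = k" by simp
    have "bipoly_deg_le k (\<lambda>a b. X a b ^ (k-j) * Y a b ^ j)" using bXY[of "k-j" j] unfolding kk .
    from bp_scale[OF this, of "real (k choose j)"]
    show "bipoly_deg_le k (\<lambda>a b. if odd j then real (k choose j) * X a b ^ (k - j) * Y a b ^ j else 0)"
      by (cases "odd j") (simp_all add: mult.assoc bp_zero)
  qed
  have bq: "\<forall>l<Suc k. bipoly_deg_le k (q l)"
  proof (intro allI impI)
    fix l assume "l < Suc k"
    show "bipoly_deg_le k (q l)"
    proof (cases "l < k")
      case True then have "q l = M l" unfolding q_def by auto
      then show ?thesis using bM True by simp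
    next
      case False then have "q l = (\<lambda>a b. 2^k * T a b)" unfolding q_def by auto
      then show ?thesis using bp_scale[OF bT] by simp
    qed
  qed
  have iden: "2 ^ (2 * (k - 1)) * (a ^ k - b ^ k)\<^sup>2 - (a - b) ^ (2 * k) = (\<Sum>l<Suc k. (q l a b)\<^sup>2)"
    for a b :: real
  proof -
    define x where "x = X a b"
    define y where "y = Y a b"
    define t where "t = T a b"
    have ab: "a = x + y" "b = x - y" unfolding x_def y_def X_def Y_def by simp_all
    have tt: "t = (\<Sum>j<k. if odd j then real (k choose j) * x^(k-j) * y^j else 0)"
      unfolding t_def T_def x_def y_def ..
    have d: "a^k - b^k = 2*t + 2*y^k" unfolding ab tt using binom_diff[OF assms] .
    have k1: "k \<ge> 1" using assms by presburger
    have p2: "(2::real)^(2*(k-1)) * 4 = 2^(2*k)"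
    proof -
      have "2*(k-1) + 2 = 2*k" using k1 by simp
      then show ?thesis by (metis power_add numeral_Bit0 power2_eq_square mult_2 numeral_One power_one_right)
    qed
    have amb: "(a - b)^(2*k) = 2^(2*k) * (y^k)^2"
      unfolding ab by (simp add: power_mult_distrib power_mult[symmetric] mult.commute)
    have lhs: "2 ^ (2 * (k - 1)) * (a ^ k - b ^ k)\<^sup>2 - (a - b) ^ (2 * k)
       = 2^(2*k) * t^2 + 2^(2*k) * (2 * y^k * t)"
      unfolding d amb using p2 by (simp add: power2_eq_square algebra_simps)
    have Msq: "(M l a b)^2 = (if odd l then 2^(2*k) * (2 * real (k choose l) * x^(k-l) * y^(k+l)) else 0)"
      if "l < k" for l
    proof (cases "odd l")
      case True
      have e1: "x^(k-l) = (x^((k-l) div 2))^2"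
        using True assms that by (simp add: power_mult[symmetric])
      have e2: "y^(k+l) = (y^((k+l) div 2))^2"
        using True assms that by (simp add: power_mult[symmetric])
      have "(M l a b)^2 = (2::real)^(2*k) * (sqrt (2 * real (k choose l)))^2 * (x^((k-l) div 2))^2 * (y^((k+l) div 2))^2"
        using True unfolding M_def x_def y_def by (simp add: power_mult_distrib power_mult[symmetric] mult.commute)
      also have "\<dots> = 2^(2*k) * (2 * real (k choose l) * x^(k-l) * y^(k+l))"
        unfolding e1 e2 by simp
      finally show ?thesis using True by simp
    qed (simp add: M_def)
    have "2 * y^k * t = (\<Sum>j<k. if odd j then 2 * real (k choose j) * x^(k-j) * y^(k+j) else 0)"
      unfolding tt sum_distrib_left by (rule sum.cong) (auto simp: power_add)
    then have "2^(2*k) * (2 * y^k * t) = (\<Sum>l<k. 2^(2*k) * (if odd l then 2 * real (k choose l) * x^(k-l) * y^(k+l) else 0))"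
      by (simp add: sum_distrib_left)
    also have "\<dots> = (\<Sum>l<k. (M l a b)^2)"
      by (rule sum.cong) (auto simp: Msq mult.assoc)
    finally have "2^(2*k) * (2 * y^k * t) = (\<Sum>l<k. (M l a b)^2)" .
    moreover have "(\<Sum>l<Suc k. (q l a b)\<^sup>2) = (\<Sum>l<k. (M l a b)^2) + (2^k * t)^2"
      unfolding q_def t_def by simp
    ultimately show ?thesis unfolding lhs by (simp add: power_mult_distrib power_mult[symmetric] mult.commute)
  qed
  show ?thesis using bq iden by blast
qed

end
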